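(* Let $(a_n)_{n\ge 0}$ be the Pisot sequence $E(4,7)$, i.e. $a_0=4$, $a_1=7$, and $a_n=\left\lfloor \frac{a_{n-1}^2}{a_{n-2}}+\frac12\right\rfloor$ for $n\ge 2$. Then $a_n = 2a_{n-1}-a_{n-2}+a_{n-3}$ for all $n\ge 3$.
   Context: $\lfloor x\rfloor$ denotes the largest integer $\le x$. The sequence begins $4, 7, 12, 21, 37, 65, 114, 200, \dots$. *)

theory Defs
  imports Complex_Main
begin

fun pisot_E47 :: "nat \<Rightarrow> int" where
  "pisot_E47 0 = 4"
| "pisot_E47 (Suc 0) = 7"
| "pisot_E47 (Suc (Suc n)) =
     \<lfloor>(real_of_int (pisot_E47 (Suc n)))^2 / real_of_int (pisot_E47 n) + 1/2\<rfloor>"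

end

theory Submission
  imports Defs
begin

fun bb :: "nat \<Rightarrow> int" where
  "bb 0 = 4"
| "bb (Suc 0) = 7"
| "bb (Suc (Suc 0)) = 12"
| "bb (Suc (Suc (Suc n))) = 2 * bb (Suc (Suc n)) - bb (Suc n) + bb n"

lemma b3: "bb (n+3) = 2 * bb (n+2) - bb (n+1) + bb n"
  by (simp add: eval_nat_numeral)

definition Dp :: "nat \<Rightarrow> int" where
  "Dp n = bb (n+1)^2 - bb (n+2) * bb n"

lemma Drec: "Dp (n+3) = Dp (n+2) - 2 * Dp (n+1) + Dp n"
  unfolding Dp_def by (simp add: eval_nat_numeral algebra_simps power2_eq_square)

lemma ratio: "0 < bb n \<and> 17 * bb n \<le> 10 * bb (n+1) \<and> bb (n+1) \<le> 2 * bb n"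
proof -
  have "(0 < bb n \<and> 17 * bb n \<le> 10 * bb (n+1) \<and> bb (n+1) \<le> 2 * bb n) \<and>
        (0 < bb (n+1) \<and> 17 * bb (n+1) \<le> 10 * bb (n+2) \<and> bb (n+2) \<le> 2 * bb (n+1))"
  proof (induction n)
    case 0
    then show ?case by (simp add: eval_nat_numeral)
  next
    case (Suc n)
    have h3: "bb (n+3) = 2 * bb (n+2) - bb (n+1) + bb n" by (rule b3)
    from Suc show ?case using h3 by (simp add: eval_nat_numeral)
  qed
  then show ?thesis by blast
qed

definition QQ :: "int \<Rightarrow> int \<Rightarrow> int \<Rightarrow> int" where
  "QQ x y z = 3*x*x + 8*y*y + 4*z*z - 6*x*y + 2*x*z - 6*y*z"

lemma Qdecay: "100 * QQ y z (z - 2*y + x) \<le> 289 * QQ x y z"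
proof -
  have id: "4*351315*467*(289 * QQ x y z - 100 * QQ y z (z - 2*y + x)) =
     4*351315*(467*x - 167*y + 189*z)^2 + (2*351315*y - 373052*z)^2 + 175513482356 * z^2"
    unfolding QQ_def by (simp add: algebra_simps power2_eq_square)
  have "0 \<le> 4*351315*(467*x - 167*y + 189*z)^2 + (2*351315*y - 373052*z)^2 + 175513482356 * z^2"
    by simp
  then have "0 \<le> 4*351315*467*(289 * QQ x y z - 100 * QQ y z (z - 2*y + x))" using id by simp
  then show ?thesis by (simp add: zero_le_mult_iff)
qed

lemma Qlow: "43 * x^2 \<le> 23 * QQ x y z"
proof -
  have id: "26*(23 * QQ x y z - 43 * x^2) = (26*x - 69*y + 23*z)^2 + 23*(y-9*z)^2"
    unfolding QQ_def by (simp add: algebra_simps power2_eq_square)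
  have "0 \<le> (26*x - 69*y + 23*z)^2 + 23*(y-9*z)^2" by simp
  then have "0 \<le> 26*(23 * QQ x y z - 43 * x^2)" using id by simp
  then show ?thesis by (simp add: zero_le_mult_iff)
qed

lemma inv: "n \<ge> 5 \<Longrightarrow> 92 * QQ (Dp n) (Dp (n+1)) (Dp (n+2)) < 43 * (bb n)^2"
proof (induction n rule: dec_induct)
  case base
  then show ?case by (simp add: QQ_def Dp_def eval_nat_numeral)
next
  case (step n)
  have d: "Dp (n+3) = Dp (n+2) - 2 * Dp (n+1) + Dp n" by (rule Drec)
  have q: "100 * QQ (Dp (n+1)) (Dp (n+2)) (Dp (n+3)) \<le> 289 * QQ (Dp n) (Dp (n+1)) (Dp (n+2))"
    unfolding d using Qdecay by simp
  have r: "0 < bb n" "17 * bb n \<le> 10 * bb (n+1)" using ratio[of n] by auto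
  have "(17 * bb n)^2 \<le> (10 * bb (n+1))^2"
    using r by (intro power_mono) auto
  then have bsq: "289 * (bb n)^2 \<le> 100 * (bb (n+1))^2" by (simp add: power_mult_distrib)
  have e: "Suc n + 1 = n + 2" "Suc n + 2 = n + 3" by simp_all
  show ?case unfolding e using q bsq step.IH by simp
qed

lemma key: "4 * (Dp n)^2 < (bb n)^2"
proof (cases "n \<ge> 5")
  case True
  from inv[OF True] Qlow[of "Dp n" "Dp (n+1)" "Dp (n+2)"] show ?thesis by linarith
next
  case False
  then have "n = 0 \<or> n = 1 \<or> n = 2 \<or> n = 3 \<or> n = 4" by auto
  then show ?thesis by (auto simp: Dp_def eval_nat_numeral)
qed

lemma agree: "pisot_E47 n = bb n \<and> pisot_E47 (Suc n) = bb (Suc n)"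
proof (induction n)
  case 0
  then show ?case by simp
next
  case (Suc n)
  have r: "0 < bb n" using ratio[of n] by auto
  have k: "4 * (Dp n)^2 < (bb n)^2" by (rule key)
  have k1: "2 * Dp n < bb n"
    using power2_less_imp_less[of "2 * Dp n" "bb n"] k r by (simp add: power_mult_distrib)
  have k2: "- (2 * Dp n) < bb n"
    using power2_less_imp_less[of "- (2 * Dp n)" "bb n"] k r by (simp add: power_mult_distrib)
  define B where "B = real_of_int (bb n)"
  define X where "X = real_of_int (Dp n)"
  define C where "C = real_of_int (bb (n+2))"
  have Bp: "B > 0" using r B_def by simp
  have k1r: "2 * X < B" using k1 unfolding X_def B_def by linarith
  have k2r: "- (2 * X) < B" using k2 unfolding X_def B_def by linarith
  have sq: "(real_of_int (bb (Suc n)))^2 = C * B + X"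
    unfolding C_def B_def X_def Dp_def by (simp add: algebra_simps)
  have x: "(real_of_int (bb (Suc n)))^2 / B + 1/2 = C + (X / B + 1/2)"
    using Bp by (simp add: sq field_simps)
  have lo: "0 \<le> X / B + 1/2"
  proof -
    have "- B / 2 \<le> X" using k2r by simp
    then have "- 1/2 \<le> X / B" using Bp by (simp add: le_divide_eq)
    then show ?thesis by linarith
  qed
  have hi: "X / B + 1/2 < 1"
  proof -
    have "X < B / 2" using k1r by simp
    then have "X / B < 1/2" using Bp by (simp add: divide_less_eq)
    then show ?thesis by linarith
  qed
  have "pisot_E47 (Suc (Suc n)) = \<lfloor>(real_of_int (bb (Suc n)))^2 / B + 1/2\<rfloor>"
    using Suc.IH B_def by simp
  also have "\<dots> = bb (n+2)"
    unfolding x by (subst floor_eq_iff) (use lo hi C_def in simp)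
  finally show ?case using Suc.IH by (simp add: eval_nat_numeral)
qed

theorem mainTheorem1:
  fixes n :: nat
  assumes "n \<ge> 3"
  shows "pisot_E47 n = 2 * pisot_E47 (n - 1) - pisot_E47 (n - 2) + pisot_E47 (n - 3)"
proof -
  obtain m where m: "n = m + 3" using assms by (metis add.commute le_iff_add)
  have "pisot_E47 k = bb k" for k using agree[of k] by blast
  then show ?thesis unfolding m using b3[of m] by (simp add: eval_nat_numeral)
qed

end
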